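(* For every integer $m\ge1$, $$p^{(2m)}=\sum_{a=0}^{m-1}q^{(1-2m)a}\begin{bmatrix}m-1\\ a\end{bmatrix}_{q^2}g^{(2m-2a)},\qquad p^{(2m-1)}=\sum_{a=0}^{m-1}q^{(3-2m)a}\begin{bmatrix}m-1\\ a\end{bmatrix}_{q^2}g^{(2m-2a-1)}.$$ In particular, $p^{(n)}(\kappa)\in\mathbb Z[q,q^{-1}]$ for all $n\ge0$ and all $\kappa=[2\ell]$ with $\ell\in\mathbb Z$.
   Context: $q$ is an indeterminate, $[n]=\frac{q^n-q^{-n}}{q-q^{-1}}$ for $n\in\mathbb Z$, $[n]!=[1]\cdots[n]$, $[0]!=1$. For $0\le a\le N$, $\begin{bmatrix}N\\ a\end{bmatrix}_{q^2}$ denotes the balanced Gaussian binomial coefficient in $q^2$, i.e. $\frac{[N]_{q^2}!}{[a]_{q^2}![N-a]_{q^2}!}$ with $[k]_{q^2}=\frac{q^{2k}-q^{-2k}}{q^2-q^{-2}}$. The polynomials $p_n(x)\in\mathbb Q(q)[x]$ are defined by $p_0=1$, $p_n=0$ for $n<0$, $p_{n+1}=x\,p_n+q^{1-2n}[n][n-1]p_{n-1}$ ($n\ge0$); $p^{(n)}=p_n/[n]!$. The polynomials $g_n(x)$ are $g_{2m}(x)=\prod_{i=0}^{m-1}(x^2-[2i]^2)$ and $g_{2m+1}(x)=x\prod_{i=1}^m(x^2-[2i]^2)$; $g^{(n)}=g_n/[n]!$. *)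

theory Defs
  imports "HOL-Computational_Algebra.Polynomial" "HOL-Computational_Algebra.Fraction_Field"
begin

text \<open>The field Q(q) of rational functions in the indeterminate q.\<close>
type_synonym qfield = "rat poly fract"

definition qq :: qfield where "qq = Fract [:0, 1:] 1"

definition qint :: "int \<Rightarrow> qfield" where
  "qint n = (qq powi n - qq powi (-n)) / (qq - inverse qq)"

definition qfact :: "nat \<Rightarrow> qfield" where
  "qfact n = (\<Prod>i\<in>{1..n}. qint (int i))"

definition qint2 :: "int \<Rightarrow> qfield" where
  "qint2 n = (qq powi (2*n) - qq powi (-2*n)) / (qq powi 2 - qq powi (-2))"

definition qfact2 :: "nat \<Rightarrow> qfield" where
  "qfact2 n = (\<Prod>i\<in>{1..n}. qint2 (int i))"

text \<open>Balanced Gaussian binomial in q^2 (for a \<le> N).\<close>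
definition qbinom2 :: "nat \<Rightarrow> nat \<Rightarrow> qfield" where
  "qbinom2 N a = qfact2 N / (qfact2 a * qfact2 (N - a))"

fun pp :: "nat \<Rightarrow> qfield poly" where
  "pp 0 = 1"
| "pp (Suc 0) = [:0, 1:]"
| "pp (Suc (Suc n)) = [:0, 1:] * pp (Suc n)
     + [: qq powi (1 - 2 * int (Suc n)) * qint (int (Suc n)) * qint (int n) :] * pp n"

definition pdiv :: "nat \<Rightarrow> qfield poly" where
  "pdiv n = smult (inverse (qfact n)) (pp n)"

definition gg :: "nat \<Rightarrow> qfield poly" where
  "gg n = (if even n
     then (\<Prod>i\<in>{0..<n div 2}. [: uminus ((qint (2 * int i))^2), 0, 1 :])
     else [:0, 1:] * (\<Prod>i\<in>{1..n div 2}. [: uminus ((qint (2 * int i))^2), 0, 1 :]))"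

definition gdiv :: "nat \<Rightarrow> qfield poly" where
  "gdiv n = smult (inverse (qfact n)) (gg n)"

definition laurent_Z :: "qfield set" where
  "laurent_Z = {x. \<exists>(f :: int poly) (k :: nat).
      x = Fract (map_poly rat_of_int f) 1 * qq powi (- int k)}"

end

theory Submission
  imports Defs
begin

lemma qq_pow: "qq ^ n = Fract ([:0,1:] ^ n) 1"
  by (induction n) (auto simp: qq_def mult_fract One_fract_def)

lemma qq_pow_ne1: "n > 0 \<Longrightarrow> qq ^ n \<noteq> 1"
proof
  assume "n > 0" "qq ^ n = 1"
  then have "Fract ([:0,1:] ^ n) 1 = Fract (1::rat poly) 1" by (simp add: qq_pow One_fract_def)
  then have "([:0,1:] ^ n :: rat poly) = 1" by (simp add: eq_fract)
  then have "degree ([:0,1:] ^ n :: rat poly) = 0" by simp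
  with \<open>n>0\<close> show False by (simp add: degree_power_eq)
qed

lemma qq_ne0: "qq \<noteq> 0"
  by (auto simp: qq_def Zero_fract_def eq_fract)

lemma qq_powi_ne1: "k \<noteq> 0 \<Longrightarrow> qq powi k \<noteq> 1"
proof
  assume k: "k \<noteq> 0" "qq powi k = 1"
  show False
  proof (cases "k > 0")
    case True
    then have "qq ^ nat k = 1" using k by (simp add: power_int_def)
    then show False using qq_pow_ne1[of "nat k"] True by simp
  next
    case False
    have "qq powi (-k) = 1" using k by (simp add: power_int_minus)
    then have "qq ^ nat (-k) = 1" using False by (simp add: power_int_def)
    then show False using qq_pow_ne1[of "nat (-k)"] False k by simp
  qed
qed

definition qD :: qfield where "qD = qq - inverse qq"
definition qD2 :: qfield where "qD2 = qq^2 - inverse (qq^2)"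

lemma qD_ne0: "qD \<noteq> 0"
proof
  assume "qD = 0"
  then have "qq * qq = 1" using qq_ne0 by (simp add: field_simps qD_def)
  then show False using qq_pow_ne1[of 2] by (simp add: power2_eq_square)
qed

lemma qD2_ne0: "qD2 \<noteq> 0"
proof
  assume "qD2 = 0"
  then have "qq^2 * qq^2 = 1" using qq_ne0 by (simp add: field_simps qD2_def)
  then show False using qq_pow_ne1[of 4] by (simp flip: power_add)
qed

lemma qint_alt: "qint n = (qq powi n - inverse (qq powi n)) / qD"
  by (simp add: qint_def power_int_minus qD_def)

lemma qint2_alt: "qint2 n = (qq powi (2*n) - inverse (qq powi (2*n))) / qD2"
  by (simp add: qint2_def power_int_minus qD2_def)

lemmas pwsimps = power_int_diff power_int_add power_int_power' mult.commute divide_inverse power_int_minus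

lemma qint_add: "qint (x+y) = qq powi y * qint x + qq powi (-x) * qint y"
  using qq_ne0 qD_ne0 unfolding qint_alt by (simp add: pwsimps) (simp add: field_simps)

lemma caseB: "qint (2*m+2) * qq powi (-2*a) = qint (2*m+2-2*a) + qq powi(-2*m-2) * qint (2*a)"
  using qq_ne0 qD_ne0 unfolding qint_alt by (simp add: pwsimps) (simp add: field_simps)

lemma qint_neg: "qint (-n) = - qint n"
  using qD_ne0 unfolding qint_alt by (simp add: power_int_minus field_simps)

lemma qint_ne0: "n \<noteq> 0 \<Longrightarrow> qint n \<noteq> 0"
proof
  assume n: "n \<noteq> 0" "qint n = 0"
  then have "qq powi n = inverse (qq powi n)" using qD_ne0 by (simp add: qint_alt)
  then have "qq powi n * qq powi n = 1" using qq_ne0 by (simp add: field_simps)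
  then have "qq powi (n + n) = 1" using qq_ne0 by (metis power_int_add)
  then show False using qq_powi_ne1[of "n+n"] n by simp
qed

lemma qint_0[simp]: "qint 0 = 0" by (simp add: qint_def)

lemma qint2_0[simp]: "qint2 0 = 0" by (simp add: qint2_def)

lemma qint_2n: "qint (2*n) = qint 2 * qint2 n"
proof -
  have "qint 2 = qD2 / qD" unfolding qint_alt qD2_def by (simp add: power_int_minus)
  then show ?thesis using qD_ne0 qD2_ne0 unfolding qint_alt[of "2*n"] qint2_alt by (simp add: field_simps)
qed

lemma qint2_ne0: "n \<noteq> 0 \<Longrightarrow> qint2 n \<noteq> 0"
  using qint_ne0[of "2*n"] qint_2n[of n] by auto

lemma qfact_Suc: "qfact (Suc n) = qfact n * qint (int (Suc n))"
  by (simp add: qfact_def prod.nat_ivl_Suc' mult.commute)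

lemma qfact2_Suc: "qfact2 (Suc n) = qfact2 n * qint2 (int (Suc n))"
  by (simp add: qfact2_def prod.nat_ivl_Suc' mult.commute)

lemma qfact_0[simp]: "qfact 0 = 1" by (simp add: qfact_def)
lemma qfact2_0[simp]: "qfact2 0 = 1" by (simp add: qfact2_def)

lemma qfact_ne0: "qfact n \<noteq> 0"
  by (induction n) (auto simp: qfact_Suc qint_ne0)

lemma qfact2_ne0: "qfact2 n \<noteq> 0"
  by (induction n) (auto simp: qfact2_Suc qint2_ne0)

lemma absorb1:
  assumes "a \<le> m - 1" "m \<ge> 1"
  shows "qint2 (int m) * qbinom2 (m-1) a = qint2 (int m - int a) * qbinom2 m a"
proof -
  obtain k where m: "m = Suc k" using assms by (cases m) auto
  obtain j where j: "k - a = j" by blast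
  have kj: "Suc k - a = Suc j" using assms m j by auto
  have "int m - int a = int (Suc j)" using kj assms m by auto
  then show ?thesis unfolding qbinom2_def using qfact2_ne0 qint2_ne0 m j kj
    by (simp add: qfact2_Suc field_simps del: of_nat_Suc)
qed

lemma absorb2:
  assumes "1 \<le> a" "a \<le> m"
  shows "qint2 (int m) * qbinom2 (m-1) (a-1) = qint2 (int a) * qbinom2 m a"
proof -
  obtain k where m: "m = Suc k" using assms by (cases m) auto
  obtain b where a: "a = Suc b" using assms by (cases a) auto
  have kj: "Suc k - Suc b = k - b" by simp
  show ?thesis unfolding qbinom2_def using qfact2_ne0 qint2_ne0 m a kj
    by (simp add: qfact2_Suc field_simps del: of_nat_Suc)
qed

definition fct :: "nat \<Rightarrow> qfield poly" where
  "fct i = [: uminus ((qint (2 * int i))^2), 0, 1 :]"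

lemma gg_even: "gg (2*j) = prod fct {0..<j}"
  by (simp add: gg_def fct_def)

lemma gg_odd: "gg (Suc (2*j)) = [:0,1:] * prod fct {1..j}"
  by (simp add: gg_def fct_def)

lemma fct0: "fct 0 = [:0,1:] * [:0,1:]"
  by (simp add: fct_def)

lemma fctS: "fct i = [:0,1:] * [:0,1:] - [:(qint (2 * int i))^2:]"
  by (simp add: fct_def)

lemma prod0: "prod f {0..<Suc i} = f 0 * prod f {1..i}" for f :: "nat \<Rightarrow> qfield poly"
  by (simp add: atLeastLessThanSuc_atLeastAtMost prod.atLeast_Suc_atMost)

lemma ring_aux: "(X::'a::comm_ring_1) * (X*X*P) = X*(P*(X*X - C)) + C*(X*P)"
  by (simp add: algebra_simps)

lemma x_gg: "[:0,1:] * gg k = gg (Suc k) + smult (if even k then (qint (int k))^2 else 0) (gg (k-1))"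
proof (cases "even k")
  case True
  define j where "j = k div 2"
  have k: "k = 2*j" using True unfolding j_def by simp
  show ?thesis
  proof (cases j)
    case 0
    then show ?thesis using k by (simp add: gg_def)
  next
    case (Suc i)
    have e1: "gg k = fct 0 * prod fct {1..i}" 
      unfolding k gg_even Suc prod0 by simp
    have e2: "gg (Suc k) = [:0,1:] * (prod fct {1..i} * fct (Suc i))" 
      unfolding k gg_odd Suc by (simp add: prod.cl_ivl_Suc)
    have e3: "gg (k-1) = [:0,1:] * prod fct {1..i}"
      using gg_odd[of i] k Suc by (simp add: prod.cl_ivl_Suc)
    have kk: "int k = 2 * int (Suc i)" using k Suc by simp
    have sm: "smult c p = [:c:] * p" for c and p :: "qfield poly" by simp
    have ci: "(if even k then (qint (int k))^2 else 0) = (qint (2 * int (Suc i)))^2"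
      using True kk by simp
    show ?thesis unfolding e1 e2 e3 ci sm fct0 fctS[of "Suc i"]
      by (rule ring_aux)
  qed
next
  case False
  define j where "j = k div 2"
  have k: "k = Suc (2*j)" using False unfolding j_def by presburger
  have "gg (Suc k) = gg (2 * Suc j)" using k by simp
  also have "\<dots> = fct 0 * prod fct {1..j}" unfolding gg_even prod0 by simp
  finally show ?thesis using False k by (simp add: gg_odd fct0 mult.assoc)
qed

lemma x_gdiv: "[:0,1:] * gdiv k = smult (qint (int (Suc k))) (gdiv (Suc k)) + smult (if even k then qint (int k) else 0) (gdiv (k-1))"
proof (cases k)
  case 0
  then show ?thesis using x_gg[of 0] qfact_ne0 qint_ne0[of 1]
    by (simp add: gdiv_def qfact_Suc)
next
  case (Suc j)
  have c1: "qint (int (Suc k)) * inverse (qfact (Suc k)) = inverse (qfact k)"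
    using qfact_ne0 qint_ne0[of "int (Suc k)"] by (simp add: qfact_Suc field_simps del: of_nat_Suc)
  have c2: "(if even k then qint (int k) else 0) * inverse (qfact j) = inverse (qfact k) * (if even k then (qint (int k))^2 else 0)"
    using qfact_ne0 qint_ne0[of "int k"] Suc by (simp add: qfact_Suc field_simps power2_eq_square del: of_nat_Suc)
  show ?thesis unfolding gdiv_def mult_smult_right x_gg smult_add_right smult_smult c1
    using Suc c2 by simp
qed

lemma pdiv_rec: "smult (qint (int (n+2))) (pdiv (n+2)) = [:0,1:] * pdiv (Suc n) + smult (qq powi (-1 - 2*int n) * qint (int n)) (pdiv n)"
proof -
  have c1: "qint (int (n+2)) * inverse (qfact (n+2)) = inverse (qfact (Suc n))"
    using qfact_ne0 qint_ne0[of "int (n+2)"] by (simp add: qfact_Suc field_simps del: of_nat_Suc)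
  have e: "1 - 2 * int (Suc n) = -1 - 2 * int n" by simp
  have c2: "inverse (qfact (Suc n)) * (qq powi (- 1 - 2 * int n) * qint (1 + int n) * qint (int n))
      = qq powi (-1 - 2*int n) * qint (int n) * inverse (qfact n)"
    using qfact_ne0 qint_ne0[of "1 + int n"] by (simp add: qfact_Suc field_simps)
  have "pp (n+2) = [:0,1:] * pp (Suc n) + smult (qq powi (1 - 2 * int (Suc n)) * qint (int (Suc n)) * qint (int n)) (pp n)"
    by simp
  then show ?thesis unfolding pdiv_def mult_smult_right smult_smult c1
    by (simp add: smult_add_right smult_smult c2)
qed

lemma pw_num1: "(x::'a::division_ring) powi (a * numeral k) = (x powi a) ^ numeral k"
  by (metis power_int_mult power_int_numeral)
lemma pw_num2: "(x::'a::division_ring) powi (numeral k * a) = (x powi a) ^ numeral k"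
  by (metis mult.commute pw_num1)

lemmas pws = power_int_diff power_int_add pw_num1 pw_num2 divide_inverse power_int_minus

lemma PA: "qint2 m * qint (2*m+1) * qq powi a = qint (2*m+1-2*a) * qq powi a * qint2 (m-a)
   + (qint (2*m+2-2*a) * qq powi (a+2*m-1) + qq powi (1-4*m) * qint (2*m-1) * qq powi (3*a-3+2*m)) * qint2 a"
  using qq_ne0 qD_ne0 qD2_ne0 unfolding qint_alt qint2_alt qD2_def[symmetric] apply (simp add: pws) apply (simp add: field_simps) by algebra

lemma PB: "qint (2*m+2) * qq powi (-a) = qint (2*m+2-2*a) * qq powi a + qq powi (a-2*m-2) * qint (2*a)"
  using qq_ne0 qD_ne0 unfolding qint_alt apply (simp add: pws) apply (simp add: field_simps) by algebra

definition bz :: "int \<Rightarrow> int \<Rightarrow> qfield" where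
  "bz N a = (if 0 \<le> a \<and> a \<le> N then qbinom2 (nat N) (nat a) else 0)"

lemma bzA1: assumes "m \<ge> 1" shows "qint2 m * bz (m-1) a = qint2 (m-a) * bz m a"
proof -
  consider "a < 0" | "a > m" | "a = m" | "0 \<le> a \<and> a \<le> m - 1" by linarith
  then show ?thesis
  proof cases
    case 4
    have "qint2 (int (nat m)) * qbinom2 (nat m - 1) (nat a) = qint2 (int (nat m) - int (nat a)) * qbinom2 (nat m) (nat a)"
      using 4 assms by (intro absorb1) auto
    moreover have "nat (m-1) = nat m - 1" by simp
    ultimately show ?thesis using 4 assms by (simp add: bz_def)
  qed (auto simp: bz_def)
qed

lemma bzA2: assumes "m \<ge> 1" shows "qint2 m * bz (m-1) (a-1) = qint2 a * bz m a"
proof -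
  consider "a < 0" | "a > m" | "a = 0" | "1 \<le> a \<and> a \<le> m" by linarith
  then show ?thesis
  proof cases
    case 4
    have "qint2 (int (nat m)) * qbinom2 (nat m - 1) (nat a - 1) = qint2 (int (nat a)) * qbinom2 (nat m) (nat a)"
      using 4 assms by (intro absorb2) auto
    moreover have "nat (m-1) = nat m - 1" "nat (a-1) = nat a - 1" by auto
    ultimately show ?thesis using 4 assms by (simp add: bz_def)
  qed (auto simp: bz_def)
qed

lemma idA: assumes m: "m \<ge> 1"
  shows "qint (2*m+1) * (qq powi ((1-2*m)*a) * bz m a) =
    qint (2*m+1-2*a) * (qq powi ((1-2*m)*a) * bz (m-1) a)
  + qint (2*m+2-2*a) * (qq powi ((1-2*m)*(a-1)) * bz (m-1) (a-1))
  + qq powi (1-4*m) * qint (2*m-1) * (qq powi ((3-2*m)*(a-1)) * bz (m-1) (a-1))"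
  (is "?L = ?R")
proof -
  define Z where "Z = qq powi (-2*m*a)"
  have p1: "qq powi ((1-2*m)*a) = Z * qq powi a" unfolding Z_def using qq_ne0
    by (simp add: power_int_add[symmetric] algebra_simps)
  have p2: "qq powi ((1-2*m)*(a-1)) = Z * qq powi (a+2*m-1)" unfolding Z_def using qq_ne0
    by (simp add: power_int_add[symmetric] algebra_simps)
  have p3: "qq powi ((3-2*m)*(a-1)) = Z * qq powi (3*a-3+2*m)" unfolding Z_def using qq_ne0
    by (simp add: power_int_add[symmetric] algebra_simps)
  have h1: "qint2 m * bz (m-1) a = qint2 (m-a) * bz m a" using bzA1[OF m] .
  have h2: "qint2 m * bz (m-1) (a-1) = qint2 a * bz m a" using bzA2[OF m] .
  have "qint2 m * ?R = qint (2*m+1-2*a) * Z * qq powi a * (qint2 m * bz (m-1) a)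
     + (qint (2*m+2-2*a) * Z * qq powi (a+2*m-1) + qq powi (1-4*m) * qint (2*m-1) * Z * qq powi (3*a-3+2*m)) * (qint2 m * bz (m-1) (a-1))"
    unfolding p1 p2 p3 by (simp add: algebra_simps)
  also have "\<dots> = Z * bz m a * (qint (2*m+1-2*a) * qq powi a * qint2 (m-a)
   + (qint (2*m+2-2*a) * qq powi (a+2*m-1) + qq powi (1-4*m) * qint (2*m-1) * qq powi (3*a-3+2*m)) * qint2 a)"
    unfolding h1 h2 by (simp add: algebra_simps)
  also have "\<dots> = Z * bz m a * (qint2 m * qint (2*m+1) * qq powi a)"
    unfolding PA ..
  also have "\<dots> = qint2 m * ?L" unfolding p1 by (simp add: algebra_simps)
  finally show ?thesis using qint2_ne0[of m] m by simp
qed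

lemma idB: assumes m: "m \<ge> 1"
  shows "qint (2*m+2) * (qq powi ((-1-2*m)*a) * bz m a) =
    qint (2*m+2-2*a) * (qq powi ((1-2*m)*a) * bz m a)
  + qq powi (-1-4*m) * qint (2*m) * (qq powi ((1-2*m)*(a-1)) * bz (m-1) (a-1))"
  (is "?L = ?R")
proof -
  define Z where "Z = qq powi (-2*m*a)"
  have p0: "qq powi ((-1-2*m)*a) = Z * qq powi (-a)" unfolding Z_def using qq_ne0
    by (simp add: power_int_add[symmetric] algebra_simps)
  have p1: "qq powi ((1-2*m)*a) = Z * qq powi a" unfolding Z_def using qq_ne0
    by (simp add: power_int_add[symmetric] algebra_simps)
  have p2: "qq powi ((1-2*m)*(a-1)) = Z * qq powi (a+2*m-1)" unfolding Z_def using qq_ne0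
    by (simp add: power_int_add[symmetric] algebra_simps)
  have p4: "qq powi (-1-4*m) * qq powi (a+2*m-1) = qq powi (a-2*m-2)" using qq_ne0
    by (simp add: power_int_add[symmetric] algebra_simps)
  have h2: "qint2 m * bz (m-1) (a-1) = qint2 a * bz m a" using bzA2[OF m] .
  have "?R = qint (2*m+2-2*a) * Z * qq powi a * bz m a + qint 2 * Z * (qq powi (-1-4*m) * qq powi (a+2*m-1)) * (qint2 m * bz (m-1) (a-1))"
    unfolding p1 p2 qint_2n by (simp add: algebra_simps)
  also have "\<dots> = Z * bz m a * (qint (2*m+2-2*a) * qq powi a + qq powi (a-2*m-2) * (qint 2 * qint2 a))"
    unfolding h2 p4 by (simp add: algebra_simps)
  also have "\<dots> = Z * bz m a * (qint (2*m+2) * qq powi (-a))"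
    unfolding PB qint_2n[symmetric] ..
  also have "\<dots> = ?L" unfolding p0 by (simp add: algebra_simps)
  finally show ?thesis ..
qed

definition ex :: "nat \<Rightarrow> int" where "ex n = (if even n then 1 - int n else 2 - int n)"
definition Mh :: "nat \<Rightarrow> int" where "Mh n = int ((n+1) div 2)"

definition Dc :: "nat \<Rightarrow> nat \<Rightarrow> qfield" where
  "Dc n k = (if n = 0 then (if k = 0 then 1 else 0)
     else if even (int n - int k) then qq powi (ex n * ((int n - int k) div 2)) * bz (Mh n - 1) ((int n - int k) div 2) else 0)"

lemma Dc_form: "n \<ge> 1 \<Longrightarrow> int n - int k = 2*a \<Longrightarrow> Dc n k = qq powi (ex n * a) * bz (Mh n - 1) a"
  unfolding Dc_def by simp

lemma Dc_odd: "n \<ge> 1 \<Longrightarrow> odd (int n - int k) \<Longrightarrow> Dc n k = 0"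
  unfolding Dc_def by simp

lemma exM_odd: "int n = 2*m - 1 \<Longrightarrow> ex n = 3 - 2*m \<and> Mh n = m"
proof -
  assume h: "int n = 2*m - 1"
  then have o: "odd n" by presburger
  have "int ((n+1) div 2) = m" using h by linarith
  then show ?thesis using o h by (simp add: ex_def Mh_def)
qed

lemma exM_even: "int n = 2*m \<Longrightarrow> ex n = 1 - 2*m \<and> Mh n = m"
proof -
  assume h: "int n = 2*m"
  then have o: "even n" by presburger
  have "int ((n+1) div 2) = m" using h by linarith
  then show ?thesis using o h by (simp add: ex_def Mh_def)
qed

lemma Dc_gt: "k > n \<Longrightarrow> Dc n k = 0"
  unfolding Dc_def bz_def by auto

lemma Dc_k0: "n \<ge> 1 \<Longrightarrow> Dc n 0 = 0"
proof -
  assume n: "n \<ge> 1"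
  show ?thesis
  proof (cases "even n")
    case True
    then obtain m where m: "int n = 2*m" by (metis even_of_nat_iff evenE)
    then have "Dc n 0 = qq powi (ex n * m) * bz (Mh n - 1) m" using n by (intro Dc_form) auto
    then show ?thesis using exM_even[OF m] by (simp add: bz_def)
  next
    case False
    then show ?thesis using n by (intro Dc_odd) auto
  qed
qed

lemma Drec: "qint (int (n+2)) * Dc (n+2) k = qint (int k) * Dc (Suc n) (k-1)
   + (if even (Suc k) then qint (int (Suc k)) else 0) * Dc (Suc n) (Suc k)
   + qq powi (-1-2*int n) * qint (int n) * Dc n k"
proof (cases k)
  case 0
  have "qq powi (-1-2*int n) * qint (int n) * Dc n k = 0"
    using 0 Dc_k0[of n] by (cases "n = 0") auto
  then show ?thesis using 0 Dc_k0[of "n+2"] by simp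
next
  case (Suc j)
  show ?thesis
  proof (cases "odd (int n - int k)")
    case True
    have z1: "Dc (n+2) k = 0" using True by (intro Dc_odd) auto
    have z2: "Dc (Suc n) j = 0" using True Suc by (intro Dc_odd) auto
    have z3: "Dc (Suc n) (Suc k) = 0" using True by (intro Dc_odd) auto
    have z4: "Dc n k = 0" using True Suc by (cases "n = 0") (auto simp: Dc_def)
    show ?thesis using Suc z1 z2 z3 z4 by simp
  next
    case False
    then obtain b where b: "int n - int k = 2*b" by (metis evenE)
    define a where "a = b + 1"
    show ?thesis
    proof (cases "even n")
      case True
      then obtain m where m: "int n = 2*m" by (metis even_of_nat_iff evenE)
      have kk: "int k = 2*m + 2 - 2*a" using b m a_def by simp
      have e1: "ex (n+2) = -1-2*m" "Mh (n+2) - 1 = m" using exM_even[of "n+2" "m+1"] m by (simp_all add: algebra_simps)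
      have e2: "ex (Suc n) = 1-2*m" "Mh (Suc n) - 1 = m" using exM_odd[of "Suc n" "m+1"] m by (simp_all add: algebra_simps)
      have d1: "int (n+2) - int k = 2*a" "int (Suc n) - int (k-1) = 2*a" using m kk Suc by linarith+
      have D1: "Dc (n+2) k = qq powi ((-1-2*m)*a) * bz m a"
        using Dc_form[OF _ d1(1)] e1 by simp
      have D2: "Dc (Suc n) (k-1) = qq powi ((1-2*m)*a) * bz m a"
        using Dc_form[OF _ d1(2)] e2 by simp
      have D3: "\<not> even (Suc k)" using kk by presburger
      show ?thesis
      proof (cases "m = 0")
        case True
        then have n0: "n = 0" using m by simp
        show ?thesis
        proof (cases "a = 0")
          case True
          then have "k = 2" using kk n0 \<open>m = 0\<close> by simp
          then show ?thesis using D1 D2 n0 \<open>m = 0\<close> True by (simp add: bz_def qbinom2_def)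
        next
          case False
          then show ?thesis using D1 D2 D3 n0 \<open>m = 0\<close> by (simp add: bz_def)
        qed
      next
        case False
        then have m1: "m \<ge> 1" using m by simp
        have e4: "ex n = 1-2*m" "Mh n - 1 = m - 1" using exM_even[of n m] m by simp_all
        have d4: "int n - int k = 2*(a-1)" using m kk by (simp add: algebra_simps)
        have D4: "Dc n k = qq powi ((1-2*m)*(a-1)) * bz (m-1) (a-1)"
          using Dc_form[OF _ d4] e4 m1 m by simp
        have q1: "int (n+2) = 2*m+2" "-1 - 2 * int n = -1 - 4*m" using m by simp_all
        show ?thesis unfolding D1 D2 D4 q1 kk m using D3 idB[OF m1, of a] by simp
      qed
    next
      case False
      define m where "m = (int n + 1) div 2"
      have m: "int n = 2*m - 1" using False unfolding m_def by presburger
      have m1: "m \<ge> 1" using m by simp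
      have kk: "int k = 2*m + 1 - 2*a" using b m a_def by simp
      have e1: "ex (n+2) = 1-2*m" "Mh (n+2) - 1 = m" using exM_odd[of "n+2" "m+1"] m by (simp_all add: algebra_simps)
      have e2: "ex (Suc n) = 1-2*m" "Mh (Suc n) - 1 = m - 1" using exM_even[of "Suc n" m] m by (simp_all add: algebra_simps)
      have e4: "ex n = 3-2*m" "Mh n - 1 = m - 1" using exM_odd[of n m] m by simp_all
      have d1: "int (n+2) - int k = 2*a" "int (Suc n) - int (k-1) = 2*a"
         "int (Suc n) - int (Suc k) = 2*(a-1)" "int n - int k = 2*(a-1)" using m kk Suc by (simp_all add: algebra_simps)
      have D1: "Dc (n+2) k = qq powi ((1-2*m)*a) * bz m a"
        using Dc_form[OF _ d1(1)] e1 by simp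
      have D2: "Dc (Suc n) (k-1) = qq powi ((1-2*m)*a) * bz (m-1) a"
        using Dc_form[OF _ d1(2)] e2 by simp
      have D3: "even (Suc k)" using kk by presburger
      have D3': "Dc (Suc n) (Suc k) = qq powi ((1-2*m)*(a-1)) * bz (m-1) (a-1)"
        using Dc_form[OF _ d1(3)] e2 by simp
      have D4: "Dc n k = qq powi ((3-2*m)*(a-1)) * bz (m-1) (a-1)"
        using Dc_form[OF _ d1(4)] e4 m1 m by simp
      have q1: "int (n+2) = 2*m+1" "-1 - 2 * int n = 1 - 4*m" "int (Suc k) = 2*m+2-2*a" using m kk by simp_all
      show ?thesis unfolding D1 D2 D3' D4 q1 kk m using D3 idA[OF m1, of a] by simp
    qed
  qed
qed

lemma smult_sum_right: "smult a (sum f S) = (\<Sum>i\<in>S. smult a (f i))"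
  by (induct S rule: infinite_finite_induct) (auto simp: smult_add_right)

definition SS :: "nat \<Rightarrow> qfield poly" where
  "SS n = (\<Sum>k\<le>n. smult (Dc n k) (gdiv k))"

lemma SS_ext: "n \<le> N \<Longrightarrow> SS n = (\<Sum>k\<le>N. smult (Dc n k) (gdiv k))"
  unfolding SS_def by (rule sum.mono_neutral_left) (auto simp: Dc_gt)

lemma SS_rec: "[:0,1:] * SS (Suc n) + smult (qq powi (-1-2*int n) * qint (int n)) (SS n)
   = smult (qint (int (n+2))) (SS (n+2))"
proof -
  define c where "c = qq powi (-1-2*int n) * qint (int n)"
  define ev where "ev k = (if even k then qint (int k) else 0)" for k :: nat
  have "[:0,1:] * SS (Suc n) = (\<Sum>k\<le>Suc n. smult (Dc (Suc n) k) ([:0,1:] * gdiv k))"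
    unfolding SS_def by (simp only: sum_distrib_left mult_smult_right)
  also have "\<dots> = (\<Sum>k\<le>Suc n. smult (Dc (Suc n) k * qint (int (Suc k))) (gdiv (Suc k)))
      + (\<Sum>k\<le>Suc n. smult (Dc (Suc n) k * ev k) (gdiv (k-1)))"
    unfolding x_gdiv ev_def by (simp add: sum.distrib smult_add_right smult_smult)
  also have "(\<Sum>k\<le>Suc n. smult (Dc (Suc n) k * qint (int (Suc k))) (gdiv (Suc k)))
      = (\<Sum>j\<le>n+2. smult (qint (int j) * Dc (Suc n) (j-1)) (gdiv j))"
  proof -
    have "(\<Sum>j\<le>Suc (Suc n). smult (qint (int j) * Dc (Suc n) (j-1)) (gdiv j))
       = smult (qint (int 0) * Dc (Suc n) (0-1)) (gdiv 0) + (\<Sum>k\<le>Suc n. smult (qint (int (Suc k)) * Dc (Suc n) (Suc k - 1)) (gdiv (Suc k)))"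
      by (rule sum.atMost_Suc_shift)
    then show ?thesis by (simp add: mult.commute)
  qed
  also have "(\<Sum>k\<le>Suc n. smult (Dc (Suc n) k * ev k) (gdiv (k-1)))
      = (\<Sum>j\<le>n+2. smult (ev (Suc j) * Dc (Suc n) (Suc j)) (gdiv j))"
  proof -
    have "(\<Sum>k\<le>Suc n. smult (Dc (Suc n) k * ev k) (gdiv (k-1)))
        = smult (Dc (Suc n) 0 * ev 0) (gdiv (0-1)) + (\<Sum>j\<le>n. smult (Dc (Suc n) (Suc j) * ev (Suc j)) (gdiv (Suc j - 1)))"
      by (rule sum.atMost_Suc_shift)
    also have "\<dots> = (\<Sum>j\<le>n. smult (ev (Suc j) * Dc (Suc n) (Suc j)) (gdiv j))"
      by (simp add: ev_def mult.commute)
    also have "\<dots> = (\<Sum>j\<le>n+2. smult (ev (Suc j) * Dc (Suc n) (Suc j)) (gdiv j))"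
      by (rule sum.mono_neutral_left) (auto simp: Dc_gt)
    finally show ?thesis .
  qed
  finally have A: "[:0,1:] * SS (Suc n) = (\<Sum>j\<le>n+2. smult (qint (int j) * Dc (Suc n) (j-1)) (gdiv j))
      + (\<Sum>j\<le>n+2. smult (ev (Suc j) * Dc (Suc n) (Suc j)) (gdiv j))" .
  have B: "smult c (SS n) = (\<Sum>j\<le>n+2. smult (c * Dc n j) (gdiv j))"
    unfolding SS_ext[of n "n+2", OF le_add1] by (simp only: smult_sum_right smult_smult)
  have coef: "qint (int j) * Dc (Suc n) (j-1) + ev (Suc j) * Dc (Suc n) (Suc j) + c * Dc n j = qint (int (n+2)) * Dc (n+2) j" for j
    using Drec[of n j] unfolding ev_def c_def by (simp only: mult.assoc)
  have "[:0,1:] * SS (Suc n) + smult c (SS n) = (\<Sum>j\<le>n+2. smult (qint (int j) * Dc (Suc n) (j-1) + ev (Suc j) * Dc (Suc n) (Suc j) + c * Dc n j) (gdiv j))"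
    unfolding A B by (simp add: sum.distrib smult_add_left)
  also have "\<dots> = (\<Sum>j\<le>n+2. smult (qint (int (n+2)) * Dc (n+2) j) (gdiv j))"
    using coef by (intro sum.cong) simp_all
  also have "\<dots> = smult (qint (int (n+2))) (SS (n+2))"
    unfolding SS_def by (simp only: smult_sum_right smult_smult)
  finally show ?thesis unfolding c_def .
qed

lemma qint_1: "qint 1 = 1"
  using qD_ne0 by (simp add: qint_def qD_def)

lemma pdiv_SS: "pdiv n = SS n \<and> pdiv (Suc n) = SS (Suc n)"
proof (induction n)
  case 0
  have g0: "gg 0 = 1" by (simp add: gg_def)
  have g1: "gg 1 = [:0,1:]" by (simp add: gg_def)
  have d: "Dc 1 1 = 1" "Dc 1 0 = 0" "Dc 0 0 = 1" by (auto simp: Dc_def ex_def Mh_def bz_def qbinom2_def)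
  have f1: "qfact 1 = 1" using qint_1 by (simp add: qfact_def)
  show ?case using d f1 g0 g1 by (simp add: pdiv_def SS_def gdiv_def)
next
  case (Suc n)
  have "smult (qint (int (n+2))) (pdiv (n+2)) = smult (qint (int (n+2))) (SS (n+2))"
    unfolding pdiv_rec SS_rec[symmetric] using Suc by simp
  moreover have nz: "qint (int (n+2)) \<noteq> 0" by (rule qint_ne0) simp
  ultimately have "pdiv (n+2) = SS (n+2)" using smult_cancel[OF nz] by presburger
  then show ?case using Suc by simp
qed

lemma sum_reidx:
  fixes f :: "nat \<Rightarrow> qfield poly"
  assumes N: "2*(m-1) \<le> N"
    and fg: "\<And>a. a \<le> m-1 \<Longrightarrow> f (N - 2*a) = g a"
    and z: "\<And>k. k \<le> N \<Longrightarrow> k \<notin> (\<lambda>a. N - 2*a) ` {0..m-1} \<Longrightarrow> f k = 0"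
  shows "(\<Sum>k\<le>N. f k) = (\<Sum>a=0..m-1. g a)"
proof -
  have inj: "inj_on (\<lambda>a. N - 2*a) {0..m-1}"
    using N by (auto simp: inj_on_def)
  have "(\<Sum>a=0..m-1. g a) = (\<Sum>a=0..m-1. f (N - 2*a))" using fg by simp
  also have "\<dots> = sum f ((\<lambda>a. N - 2*a) ` {0..m-1})"
    using inj by (simp add: sum.reindex)
  also have "\<dots> = (\<Sum>k\<le>N. f k)"
    by (rule sum.mono_neutral_left) (use z in auto)
  finally show ?thesis ..
qed

lemma part_even:
  assumes m: "m \<ge> 1"
  shows "pdiv (2 * m) = (\<Sum>a = 0..m - 1. smult (qq powi ((1 - 2 * int m) * int a) * qbinom2 (m - 1) a) (gdiv (2 * m - 2 * a)))"
proof -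
  have e: "ex (2*m) = 1 - 2 * int m" "Mh (2*m) - 1 = int m - 1" using exM_even[of "2*m" "int m"] by simp_all
  show ?thesis unfolding conjunct1[OF pdiv_SS] SS_def
  proof (rule sum_reidx)
    fix a assume a: "a \<le> m - 1"
    have d: "int (2*m) - int (2*m - 2*a) = 2 * int a" using a m by simp
    have "bz (int m - 1) (int a) = qbinom2 (m-1) a" using a m by (simp add: bz_def nat_diff_distrib)
    then show "smult (Dc (2*m) (2*m - 2*a)) (gdiv (2*m - 2*a)) = smult (qq powi ((1 - 2 * int m) * int a) * qbinom2 (m - 1) a) (gdiv (2 * m - 2 * a))"
      using Dc_form[OF _ d] e m by simp
  next
    fix k assume k: "k \<le> 2*m" "k \<notin> (\<lambda>a. 2*m - 2*a) ` {0..m-1}"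
    show "smult (Dc (2*m) k) (gdiv k) = 0"
    proof (cases "odd (int (2*m) - int k)")
      case True then show ?thesis using m by (simp add: Dc_odd)
    next
      case False
      then have ev: "even (2*m - k)" using k by (simp add: of_nat_diff[symmetric])
      show ?thesis
      proof (cases "k = 0")
        case True then show ?thesis using m Dc_k0[of "2*m"] by simp
      next
        case False
        define a where "a = (2*m - k) div 2"
        have "k = 2*m - 2*a" "a \<in> {0..m-1}" using ev k(1) False unfolding a_def by auto
        then show ?thesis using k(2) by blast
      qed
    qed
  qed simp
qed

lemma part_odd:
  assumes m: "m \<ge> 1"
  shows "pdiv (2 * m - 1) = (\<Sum>a = 0..m - 1. smult (qq powi ((3 - 2 * int m) * int a) * qbinom2 (m - 1) a) (gdiv (2 * m - 2 * a - 1)))"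
proof -
  have e: "ex (2*m-1) = 3 - 2 * int m" "Mh (2*m-1) - 1 = int m - 1" using exM_odd[of "2*m-1" "int m"] m by simp_all
  show ?thesis unfolding conjunct1[OF pdiv_SS] SS_def
  proof (rule sum_reidx)
    fix a assume a: "a \<le> m - 1"
    have d: "int (2*m-1) - int (2*m - 1 - 2*a) = 2 * int a" using a m by simp
    have "bz (int m - 1) (int a) = qbinom2 (m-1) a" using a m by (simp add: bz_def nat_diff_distrib)
    moreover have "2*m - 1 - 2*a = 2 * m - 2 * a - 1" by simp
    ultimately show "smult (Dc (2*m-1) (2*m - 1 - 2*a)) (gdiv (2*m - 1 - 2*a)) = smult (qq powi ((3 - 2 * int m) * int a) * qbinom2 (m - 1) a) (gdiv (2 * m - 2 * a - 1))"
      using Dc_form[OF _ d] e m by simp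
  next
    fix k assume k: "k \<le> 2*m-1" "k \<notin> (\<lambda>a. 2*m - 1 - 2*a) ` {0..m-1}"
    show "smult (Dc (2*m-1) k) (gdiv k) = 0"
    proof (cases "odd (int (2*m-1) - int k)")
      case True then show ?thesis using m by (simp add: Dc_odd)
    next
      case False
      then have ev: "even (2*m - 1 - k)" using k by (simp add: of_nat_diff[symmetric])
      define a where "a = (2*m - 1 - k) div 2"
      have "k = 2*m - 1 - 2*a" "a \<in> {0..m-1}" using ev k(1) m unfolding a_def by auto
      then show ?thesis using k(2) by blast
    qed
  qed (use m in simp)
qed

lemma of_int_fract: "(of_int k :: 'a::idom fract) = Fract (of_int k) 1"
proof (cases k rule: int_cases)
  case (nonneg n) then show ?thesis by (simp add: of_nat_fract)
next
  case (neg n) then show ?thesis by (simp add: of_nat_fract minus_fract del: of_nat_Suc)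
qed

lemma map_poly_of_int_add: "map_poly (of_int :: int \<Rightarrow> 'a::comm_ring_1) (f + g) = map_poly of_int f + map_poly of_int g"
  by (rule poly_eqI) (simp add: coeff_map_poly)

lemma map_poly_of_int_mult: "map_poly (of_int :: int \<Rightarrow> 'a::comm_ring_1) (f * g) = map_poly of_int f * map_poly of_int g"
  by (rule poly_eqI) (simp add: coeff_map_poly coeff_mult)

lemma phi: "Fract (map_poly rat_of_int f) 1 = poly (map_poly (of_int :: int \<Rightarrow> qfield) f) qq"
proof (induction f rule: pCons_induct)
  case 0 then show ?case by (simp add: Zero_fract_def)
next
  case (pCons a p)
  have "Fract (map_poly rat_of_int (pCons a p)) 1 = Fract (pCons (rat_of_int a) (map_poly rat_of_int p)) 1"
    by (simp add: map_poly_pCons)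
  also have "pCons (rat_of_int a) (map_poly rat_of_int p) = [:rat_of_int a:] + [:0,1:] * map_poly rat_of_int p"
    by simp
  also have "Fract \<dots> 1 = Fract [:rat_of_int a:] 1 + qq * Fract (map_poly rat_of_int p) 1"
    by (simp add: qq_def)
  also have "Fract [:rat_of_int a:] (1 :: rat poly) = of_int a"
    by (simp add: of_int_fract of_int_poly)
  finally show ?case using pCons.IH by (simp add: map_poly_pCons)
qed

definition II :: "qfield set" where "II = {poly (map_poly of_int f) qq | f. True}"

lemma II_add: "x \<in> II \<Longrightarrow> y \<in> II \<Longrightarrow> x + y \<in> II"
proof -
  assume "x \<in> II" "y \<in> II"
  then obtain f g where "x = poly (map_poly of_int f) qq" "y = poly (map_poly of_int g) qq" unfolding II_def by blast
  then have "x + y = poly (map_poly of_int (f + g)) qq" by (simp add: map_poly_of_int_add)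
  then show ?thesis unfolding II_def by blast
qed

lemma II_mult: "x \<in> II \<Longrightarrow> y \<in> II \<Longrightarrow> x * y \<in> II"
proof -
  assume "x \<in> II" "y \<in> II"
  then obtain f g where "x = poly (map_poly of_int f) qq" "y = poly (map_poly of_int g) qq" unfolding II_def by blast
  then have "x * y = poly (map_poly of_int (f * g)) qq" by (simp add: map_poly_of_int_mult)
  then show ?thesis unfolding II_def by blast
qed

lemma II_of_int: "of_int k \<in> II"
proof -
  have "of_int k = poly (map_poly of_int [:k:]) qq" by (simp add: map_poly_pCons)
  then show ?thesis unfolding II_def by blast
qed

lemma II_qq: "qq \<in> II"
  unfolding II_def by (auto intro!: exI[of _ "[:0,1:]"] simp: map_poly_pCons)

lemma II_pow: "qq ^ n \<in> II"
  by (induction n) (use II_of_int[of 1] II_mult II_qq in auto)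

lemma LZ_alt: "laurent_Z = {x * qq powi (- int k) | x k. x \<in> II}"
  unfolding laurent_Z_def II_def phi by blast

lemma pm: "qq powi (- int n) = inverse (qq ^ n)" by (simp add: power_int_minus)

lemma LZ_add: "x \<in> laurent_Z \<Longrightarrow> y \<in> laurent_Z \<Longrightarrow> x + y \<in> laurent_Z"
proof -
  assume "x \<in> laurent_Z" "y \<in> laurent_Z"
  then obtain a k b j where ak: "a \<in> II" "x = a * qq powi (- int k)" and bj: "b \<in> II" "y = b * qq powi (- int j)"
    unfolding LZ_alt by blast
  have "x + y = (a * qq ^ j + b * qq ^ k) * qq powi (- int (k + j))"
    unfolding ak bj pm using qq_ne0 by (simp add: field_simps power_add)
  moreover have "a * qq ^ j + b * qq ^ k \<in> II" using ak bj II_pow II_mult II_add by blast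
  ultimately show ?thesis unfolding LZ_alt by blast
qed

lemma LZ_mult: "x \<in> laurent_Z \<Longrightarrow> y \<in> laurent_Z \<Longrightarrow> x * y \<in> laurent_Z"
proof -
  assume "x \<in> laurent_Z" "y \<in> laurent_Z"
  then obtain a k b j where ak: "a \<in> II" "x = a * qq powi (- int k)" and bj: "b \<in> II" "y = b * qq powi (- int j)"
    unfolding LZ_alt by blast
  have "x * y = (a * b) * qq powi (- int (k + j))"
    unfolding ak bj pm using qq_ne0 by (simp add: field_simps power_add)
  moreover have "a * b \<in> II" using ak bj II_mult by blast
  ultimately show ?thesis unfolding LZ_alt by blast
qed

lemma LZ_II: "x \<in> II \<Longrightarrow> x \<in> laurent_Z"
proof -
  assume "x \<in> II"
  moreover have "x = x * qq powi (- int 0)" by simp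
  ultimately show ?thesis unfolding LZ_alt by blast
qed

lemma LZ_of_int: "of_int k \<in> laurent_Z"
  by (rule LZ_II[OF II_of_int])

lemma LZ_0: "0 \<in> laurent_Z" using LZ_of_int[of 0] by simp
lemma LZ_1: "1 \<in> laurent_Z" using LZ_of_int[of 1] by simp

lemma LZ_qpowi: "qq powi z \<in> laurent_Z"
proof (cases "z \<ge> 0")
  case True
  then have "qq powi z = qq ^ nat z" by (simp add: power_int_def)
  then show ?thesis using LZ_II[OF II_pow] by simp
next
  case False
  then have "qq powi z = 1 * qq powi (- int (nat (-z)))" by simp
  moreover have "(1::qfield) \<in> II" using II_of_int[of 1] by simp
  ultimately show ?thesis unfolding LZ_alt by blast
qed

lemma LZ_uminus: "x \<in> laurent_Z \<Longrightarrow> - x \<in> laurent_Z"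
  using LZ_mult[OF LZ_of_int[of "-1"]] by simp

lemma LZ_diff: "x \<in> laurent_Z \<Longrightarrow> y \<in> laurent_Z \<Longrightarrow> x - y \<in> laurent_Z"
  using LZ_add LZ_uminus by (metis diff_conv_add_uminus)

lemma LZ_sum: "(\<And>i. i \<in> A \<Longrightarrow> f i \<in> laurent_Z) \<Longrightarrow> sum f A \<in> laurent_Z"
  by (induction A rule: infinite_finite_induct) (auto simp: LZ_0 LZ_add)

lemma qint_Suc: "qint (int (Suc n)) = qq * qint (int n) + qq powi (- int n)"
  using qint_add[of "int n" 1] qint_1 by (simp add: add.commute)

lemma qint_LZ_nat: "qint (int n) \<in> laurent_Z"
proof (induction n)
  case 0 then show ?case using LZ_0 by simp
next
  case (Suc n)
  have "qint (int (Suc n)) = qq * qint (int n) + qq powi (- int n)" using qint_Suc by simp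
  then show ?case using Suc LZ_add LZ_mult LZ_qpowi[of 1] LZ_qpowi[of "- int n"] by simp
qed

lemma qint_LZ: "qint z \<in> laurent_Z"
proof (cases "z \<ge> 0")
  case True
  then show ?thesis using qint_LZ_nat[of "nat z"] by simp
next
  case False
  then have e: "int (nat (-z)) = -z" by simp
  have "qint z = - qint (int (nat (-z)))" unfolding e using qint_neg[of z] by simp
  then show ?thesis using LZ_uminus[OF qint_LZ_nat[of "nat (-z)"]] by simp
qed

lemma qint2_Suc: "qint2 (x + 1) = qq^2 * qint2 x + qq powi (-2*x)"
  using qq_ne0 qD2_ne0 unfolding qint2_alt
  apply (simp add: pws) apply (simp add: field_simps) apply (simp add: qD2_def) apply (simp add: field_simps) done

lemma qint2_LZ_nat: "qint2 (int n) \<in> laurent_Z"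
proof (induction n)
  case 0 then show ?case using LZ_0 by simp
next
  case (Suc n)
  have "qint2 (int (Suc n)) = qq^2 * qint2 (int n) + qq powi (-2 * int n)" using qint2_Suc[of "int n"] by (simp add: add.commute)
  then show ?case using Suc LZ_add LZ_mult LZ_qpowi[of 2] LZ_qpowi[of "-2 * int n"] by simp
qed

lemma PP: "qint2 m = qq powi (2*a) * qint2 (m-a) + qq powi (2*(a-m)) * qint2 a"
  using qq_ne0 qD2_ne0 unfolding qint2_alt
  by (simp add: pws) (simp add: field_simps)

lemma qbinom2_0: "qbinom2 m 0 = 1" using qfact2_ne0 by (simp add: qbinom2_def)
lemma qbinom2_m: "qbinom2 m m = 1" using qfact2_ne0 by (simp add: qbinom2_def)

lemma pascal:
  assumes "1 \<le> a" "a \<le> m - 1"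
  shows "qbinom2 m a = qq powi (2*int a) * qbinom2 (m-1) a + qq powi (2*(int a - int m)) * qbinom2 (m-1) (a-1)"
proof -
  have m: "m \<ge> 1" using assms by simp
  have am: "a \<le> m" using assms by simp
  have "qint2 (int m) * (qq powi (2*int a) * qbinom2 (m-1) a + qq powi (2*(int a - int m)) * qbinom2 (m-1) (a-1))
     = qq powi (2*int a) * (qint2 (int m) * qbinom2 (m-1) a) + qq powi (2*(int a - int m)) * (qint2 (int m) * qbinom2 (m-1) (a-1))"
    by (simp add: algebra_simps)
  also have "\<dots> = (qq powi (2*int a) * qint2 (int m - int a) + qq powi (2*(int a - int m)) * qint2 (int a)) * qbinom2 m a"
    unfolding absorb1[OF assms(2) m] absorb2[OF assms(1) am] by (simp add: algebra_simps)
  also have "\<dots> = qint2 (int m) * qbinom2 m a" using PP[of "int m" "int a"] by simp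
  finally show ?thesis using qint2_ne0[of "int m"] m by simp
qed

lemma qbinom2_LZ: "a \<le> m \<Longrightarrow> qbinom2 m a \<in> laurent_Z"
proof (induction m arbitrary: a)
  case 0 then show ?case using qbinom2_0 LZ_1 by simp
next
  case (Suc m)
  consider "a = 0" | "a = Suc m" | "1 \<le> a \<and> a \<le> m" using Suc.prems by linarith
  then show ?case
  proof cases
    case 1 then show ?thesis using qbinom2_0 LZ_1 by simp
  next
    case 2 then show ?thesis using qbinom2_m LZ_1 by simp
  next
    case 3
    then have "qbinom2 (Suc m) a = qq powi (2*int a) * qbinom2 m a + qq powi (2*(int a - int (Suc m))) * qbinom2 m (a-1)"
      using pascal[of a "Suc m"] by simp
    moreover have "qbinom2 m a \<in> laurent_Z" "qbinom2 m (a-1) \<in> laurent_Z" using Suc.IH 3 by auto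
    ultimately show ?thesis using LZ_add LZ_mult LZ_qpowi by simp
  qed
qed

definition RR :: "int \<Rightarrow> nat \<Rightarrow> qfield" where
  "RR a n = (\<Prod>i\<in>{1..n}. qint (2*(a + int i)))"

definition FF :: "int \<Rightarrow> nat \<Rightarrow> qfield" where
  "FF a n = RR a n / qfact n"

lemma RR_0: "RR a 0 = 1" by (simp add: RR_def)

lemma RR_Suc: "RR a (Suc n) = RR a n * qint (2*(a + int (Suc n)))"
  by (simp add: RR_def)

lemma RR_shift: "RR (a-1) (Suc n) = qint (2*a) * RR a n"
proof (induction n)
  case 0 then show ?case by (simp add: RR_def)
next
  case (Suc n)
  have "RR (a-1) (Suc (Suc n)) = RR (a-1) (Suc n) * qint (2*(a - 1 + int (Suc (Suc n))))"
    by (rule RR_Suc)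
  also have "2*(a - 1 + int (Suc (Suc n))) = 2*(a + int (Suc n))" by simp
  finally show ?case using Suc by (simp add: RR_Suc algebra_simps)
qed

lemma idF: "qint (2*a + 2*N) = qq powi (2*N) * qint (2*a) + qq powi (-2*a) * (qq powi N + qq powi (-N)) * qint N"
  using qq_ne0 qD_ne0 unfolding qint_alt
  apply (simp add: pws) apply (simp add: field_simps) apply (algebra)? done

lemma FF_rec: "FF a (Suc n) = qq powi (2*(int n+1)) * FF (a-1) (Suc n)
    + qq powi (-2*a) * (qq powi (int n+1) + qq powi (-(int n+1))) * FF a n"
proof -
  have f: "qfact (Suc n) = qfact n * qint (int n + 1)" by (simp add: qfact_Suc add.commute)
  have nz: "qfact n \<noteq> 0" "qint (int n + 1) \<noteq> 0" using qfact_ne0 qint_ne0[of "int n + 1"] by auto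
  have r: "RR a (Suc n) = RR a n * qint (2*a + 2*(int n + 1))" by (simp add: RR_Suc algebra_simps)
  show ?thesis unfolding FF_def r RR_shift f idF using nz by (simp add: field_simps)
qed

lemma SQ: "(qint x)^2 - (qint y)^2 = qint (x+y) * qint (x-y)"
  using qq_ne0 qD_ne0 unfolding qint_alt
  apply (simp add: pws) apply (simp add: field_simps) apply (algebra)? done

lemma FF_LZ: "FF a n \<in> laurent_Z"
proof (induction n arbitrary: a)
  case 0 then show ?case using LZ_1 by (simp add: FF_def RR_0)
next
  case (Suc n)
  define T where "T a = qq powi (-2*a) * (qq powi (int n+1) + qq powi (-(int n+1))) * FF a n" for a
  have T: "T a \<in> laurent_Z" for a
    unfolding T_def using Suc.IH LZ_mult LZ_add LZ_qpowi by simp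
  have rec: "FF a (Suc n) = qq powi (2*(int n+1)) * FF (a-1) (Suc n) + T a" for a
    unfolding T_def by (rule FF_rec)
  show ?case
  proof (induction a rule: int_induct[where k = "-1"])
    case base
    have "RR (0-1) (Suc n) = 0" using RR_shift[of 0 n] by simp
    then show ?case using LZ_0 by (simp add: FF_def)
  next
    case (step1 i)
    have "FF (i+1) (Suc n) = qq powi (2*(int n+1)) * FF i (Suc n) + T (i+1)" using rec[of "i+1"] by simp
    then show ?case using step1 T LZ_mult LZ_add LZ_qpowi by simp
  next
    case (step2 i)
    have "FF (i-1) (Suc n) = inverse (qq powi (2*(int n+1))) * (FF i (Suc n) - T i)"
      using rec[of i] qq_ne0 by (simp add: field_simps)
    also have "inverse (qq powi (2*(int n+1))) = qq powi (-(2*(int n+1)))" by (rule power_int_minus[symmetric])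
    finally have "FF (i-1) (Suc n) = qq powi (-(2*(int n+1))) * (FF i (Suc n) - T i)" .
    then show ?case using step2 T LZ_mult LZ_diff LZ_qpowi by simp
  qed
qed

lemma poly_fct: "poly (fct i) x = x^2 - (qint (2 * int i))^2"
  by (simp add: fct_def power2_eq_square algebra_simps)

lemma gg_odd_eval: "poly (gg (Suc (2*j))) (qint (2*l)) = RR (l - int j - 1) (2*j+1)"
proof (induction j)
  case 0 then show ?case by (simp add: gg_def RR_def)
next
  case (Suc j)
  have "gg (Suc (2 * Suc j)) = gg (Suc (2*j)) * fct (Suc j)"
    unfolding gg_odd by (simp add: mult.assoc)
  then have "poly (gg (Suc (2 * Suc j))) (qint (2*l)) = RR (l - int j - 1) (2*j+1) * ((qint (2*l))^2 - (qint (2 * int (Suc j)))^2)"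
    using Suc by (simp add: poly_fct)
  also have "(qint (2*l))^2 - (qint (2 * int (Suc j)))^2 = qint (2*(l - int j - 1)) * qint (2*(l - int j - 1 + int (Suc (2*j+1))))"
    unfolding SQ by (simp add: algebra_simps)
  also have "RR (l - int j - 1) (2*j+1) * (qint (2*(l - int j - 1)) * qint (2*(l - int j - 1 + int (Suc (2*j+1)))))
      = qint (2*(l - int j - 1)) * RR (l - int j - 1) (Suc (2*j+1))"
    by (simp add: RR_Suc algebra_simps)
  also have "\<dots> = RR (l - int j - 1 - 1) (Suc (Suc (2*j+1)))"
    by (rule RR_shift[symmetric])
  finally show ?case by (simp add: algebra_simps)
qed

lemma gg_even_eval: "poly (gg (2 * Suc i)) (qint (2*l)) = qint (2*l) * RR (l - int (Suc i)) (Suc (2*i))"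
proof -
  have e: "gg (2 * Suc i) = [:0,1:] * gg (Suc (2*i))" using x_gg[of "Suc (2*i)"] by simp
  have "poly (gg (2 * Suc i)) (qint (2*l)) = qint (2*l) * poly (gg (Suc (2*i))) (qint (2*l))"
    unfolding e by simp
  then show ?thesis using gg_odd_eval[of i l] by (simp add: algebra_simps)
qed

lemma EV: "qq powi (2*j) * (qint (2*l + 2*j) - qq powi (2*l) * qint (2*j)) = qint (2*l)"
  using qq_ne0 qD_ne0 unfolding qint_alt
  apply (simp add: pws) apply (simp add: field_simps) done

lemma G_LZ: "poly (gdiv k) (qint (2*l)) \<in> laurent_Z"
proof -
  have "k = 0 \<or> k = Suc (2*(k div 2)) \<or> k = 2 * Suc (k div 2 - 1)" by presburger
  then consider "k = 0" | j where "k = Suc (2*j)" | i where "k = 2 * Suc i" by blast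
  then show ?thesis
  proof cases
    case 1 then show ?thesis using LZ_1 by (simp add: gdiv_def gg_def)
  next
    case (2 j)
    have "poly (gdiv k) (qint (2*l)) = FF (l - int j - 1) (2*j+1)"
      unfolding 2 gdiv_def FF_def using gg_odd_eval[of j l] by (simp add: field_simps)
    then show ?thesis using FF_LZ by simp
  next
    case (3 i)
    define a where "a = l - int (Suc i)"
    have f: "qfact (2 * Suc i) = qfact (Suc (2*i)) * qint (2 * int (Suc i))"
      using qfact_Suc[of "Suc (2*i)"] by simp
    have nz: "qfact (Suc (2*i)) \<noteq> 0" "qint (2 * int (Suc i)) \<noteq> 0" using qfact_ne0 qint_ne0[of "2 * int (Suc i)"] by auto
    have r: "RR a (2 * Suc i) = RR a (Suc (2*i)) * qint (2*l + 2 * int (Suc i))"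
      using RR_Suc[of a "Suc (2*i)"] unfolding a_def by (simp add: algebra_simps)
    have "poly (gdiv k) (qint (2*l)) = qint (2*l) * RR a (Suc (2*i)) / qfact (2 * Suc i)"
      unfolding 3 gdiv_def a_def using gg_even_eval[of i l] by (simp add: field_simps)
    also have "\<dots> = qq powi (2 * int (Suc i)) * (FF a (2 * Suc i) - qq powi (2*l) * FF a (Suc (2*i)))"
      unfolding FF_def r f using nz EV[of "int (Suc i)" l] by (simp add: field_simps)
    finally show ?thesis using FF_LZ LZ_mult LZ_diff LZ_qpowi by simp
  qed
qed

lemma term_LZ: "a \<le> N \<Longrightarrow> poly (smult (qq powi e * qbinom2 N a) (gdiv k)) (qint (2*l)) \<in> laurent_Z"
  using LZ_mult[OF LZ_mult[OF LZ_qpowi qbinom2_LZ] G_LZ] by simp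

lemma part_int: "poly (pdiv n) (qint (2 * l)) \<in> laurent_Z"
proof (cases "n = 0")
  case True
  then show ?thesis using LZ_1 by (simp add: pdiv_def)
next
  case False
  define m where "m = (n+1) div 2"
  have m1: "m \<ge> 1" using False unfolding m_def by simp
  show ?thesis
  proof (cases "even n")
    case True
    then have n: "n = 2*m" unfolding m_def by presburger
    show ?thesis unfolding n part_even[OF m1] poly_sum
      by (rule LZ_sum) (rule term_LZ, simp)
  next
    case False
    then have n: "n = 2*m - 1" unfolding m_def by presburger
    show ?thesis unfolding n part_odd[OF m1] poly_sum
      by (rule LZ_sum) (rule term_LZ, simp)
  qed
qed

theorem proposition2p6:
  shows "(\<forall>m::nat. m \<ge> 1 \<longrightarrow>
            pdiv (2 * m) =
              (\<Sum>a = 0..m - 1. smult (qq powi ((1 - 2 * int m) * int a) * qbinom2 (m - 1) a)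
                                   (gdiv (2 * m - 2 * a)))
          \<and> pdiv (2 * m - 1) =
              (\<Sum>a = 0..m - 1. smult (qq powi ((3 - 2 * int m) * int a) * qbinom2 (m - 1) a)
                                   (gdiv (2 * m - 2 * a - 1))))
       \<and> (\<forall>(n::nat) (l::int). poly (pdiv n) (qint (2 * l)) \<in> laurent_Z)"
  using part_even part_odd part_int by blast

end
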